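(* Let $m\in\mathbb{N}$ and let $(Y^n_u)_{u\in\mathbb{R}^m_+}$, $n\in\mathbb{N}$, and $(Y_u)_{u\in\mathbb{R}^m_+}$ be real-valued random fields with continuous paths such that $Y^n\to Y$ in the sense of finite-dimensional distributions as $n\to\infty$. Assume $\int_{\mathbb{R}^m_+}\mathbb{E}|Y^n_u|\,\mathrm{d}u<\infty$ for all $n$ and $\int_{\mathbb{R}^m_+}\mathbb{E}|Y_u|\,\mathrm{d}u<\infty$. For $k,\ell,n\in\mathbb{N}$ set $$X_{n,k,\ell}=\int_{[0,\ell]^m}Y^n_{\lfloor uk\rfloor/k}\,\mathrm{d}u,\qquad X_{n,\ell}=\int_{[0,\ell]^m}Y^n_u\,\mathrm{d}u,$$ where $\lfloor u\rfloor=(\lfloor u_1\rfloor,\dots,\lfloor u_m\rfloor)$ componentwise. Suppose that for every $i\in\{0,\dots,m-1\}$ $$\lim_{\ell\to\infty}\limsup_{n\to\infty}\int_{\{u\in\mathbb{R}^m_+:\,u_{i+1}\ge\ell\}}\mathbb{E}|Y^n_u|\,\mathrm{d}u=0,$$ and that for all $\varepsilon>0$ and $\ell>0$ $$\lim_{k\to\infty}\limsup_{n\to\infty}\mathbb{P}\big(|X_{n,k,\ell}-X_{n,\ell}|>\varepsilon\big)=0.$$ Then $\int_{\mathbb{R}^m_+}Y^n_u\,\mathrm{d}u\xrightarrow{d}\int_{\mathbb{R}^m_+}Y_u\,\mathrm{d}u$ as $n\to\infty$.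
   Context: $\lfloor x\rfloor$ denotes the largest integer $l$ with $l\le x$. *)

theory Defs
  imports "HOL-Probability.Probability"
begin

definition conv_distr ::
  "(nat \<Rightarrow> 'a measure) \<Rightarrow> (nat \<Rightarrow> 'a \<Rightarrow> 'c::topological_space) \<Rightarrow> 'b measure \<Rightarrow> ('b \<Rightarrow> 'c) \<Rightarrow> bool"
where
  "conv_distr M X N Z \<longleftrightarrow>
     (\<forall>f :: 'c \<Rightarrow> real. continuous_on UNIV f \<longrightarrow> bounded (range f) \<longrightarrow>
        (\<lambda>n. \<integral>\<omega>. f (X n \<omega>) \<partial>M n) \<longlonglongrightarrow> (\<integral>\<omega>. f (Z \<omega>) \<partial>N))"

text \<open>Convergence of finite-dimensional distributions of random fields indexed by T:
  for every finite list of points t 0, ..., t (k-1) in T, the random vector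
  (Y n (t 0), ..., Y n (t (k-1))) converges in distribution (vectors are embedded in
  nat => real with the product topology, padded by zeros).\<close>
definition fdd_conv ::
  "(nat \<Rightarrow> 'a measure) \<Rightarrow> (nat \<Rightarrow> 'i \<Rightarrow> 'a \<Rightarrow> real) \<Rightarrow> 'b measure \<Rightarrow> ('i \<Rightarrow> 'b \<Rightarrow> real) \<Rightarrow> 'i set \<Rightarrow> bool"
where
  "fdd_conv M Y N Z T \<longleftrightarrow>
     (\<forall>(k::nat) (t::nat \<Rightarrow> 'i). (\<forall>i<k. t i \<in> T) \<longrightarrow>
        conv_distr M (\<lambda>n \<omega>. (\<lambda>i. if i < k then Y n (t i) \<omega> else 0))
                   N (\<lambda>\<omega>. (\<lambda>i. if i < k then Z (t i) \<omega> else 0)))"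

definition orthant :: "(real ^ 'm) set" where
  "orthant = {u. \<forall>j. 0 \<le> u $ j}"

end

theory Submission
  imports Defs
begin
definition gr :: "nat \<Rightarrow> real ^ 'm \<Rightarrow> real ^ 'm" where
  "gr k u = (\<chi> j. real_of_int \<lfloor>u $ j * real k\<rfloor> / real k)"

lemma floor_div_bounds:
  fixes x :: real assumes "k > 0"
  shows "real_of_int \<lfloor>x * real k\<rfloor> / real k \<le> x" "x - 1 / real k < real_of_int \<lfloor>x * real k\<rfloor> / real k"
proof -
  have k: "real k > 0" using assms by simp
  have a: "real_of_int \<lfloor>x * real k\<rfloor> \<le> x * real k" by simp
  have b: "x * real k < real_of_int \<lfloor>x * real k\<rfloor> + 1" by linarith
  show "real_of_int \<lfloor>x * real k\<rfloor> / real k \<le> x" using a k by (simp add: divide_simps)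
  have "(x * real k - 1) / real k < real_of_int \<lfloor>x * real k\<rfloor> / real k"
    using b k by (intro divide_strict_right_mono) auto
  then show "x - 1 / real k < real_of_int \<lfloor>x * real k\<rfloor> / real k" using k by (simp add: diff_divide_distrib)
qed

lemma gr_tendsto: "(\<lambda>k. gr (Suc k) u) \<longlonglongrightarrow> u"
proof -
  have "(\<lambda>k. real_of_int \<lfloor>u $ j * real (Suc k)\<rfloor> / real (Suc k)) \<longlonglongrightarrow> u $ j" for j
  proof (rule tendsto_sandwich[where f="\<lambda>k. u $ j - 1 / real (Suc k)" and h="\<lambda>k. u $ j"])
    show "\<forall>\<^sub>F n in sequentially. u $ j - 1 / real (Suc n) \<le> real_of_int \<lfloor>u $ j * real (Suc n)\<rfloor> / real (Suc n)"
      using floor_div_bounds(2)[of "Suc _" "u $ j"] by (auto intro!: always_eventually less_imp_le)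
    show "\<forall>\<^sub>F n in sequentially. real_of_int \<lfloor>u $ j * real (Suc n)\<rfloor> / real (Suc n) \<le> u $ j"
      using floor_div_bounds(1)[of "Suc _" "u $ j"] by (auto intro!: always_eventually)
    have "(\<lambda>k. 1 / real (Suc k)) \<longlonglongrightarrow> 0" using LIMSEQ_Suc[OF lim_inverse_n'] by simp
    from tendsto_diff[OF tendsto_const this, of "u $ j"]
    show "(\<lambda>k. u $ j - 1 / real (Suc k)) \<longlonglongrightarrow> u $ j" by simp
  qed simp
  then show ?thesis unfolding gr_def by (auto intro!: vec_tendstoI)
qed

lemma gr_nonneg: "0 \<le> u $ j \<Longrightarrow> 0 \<le> gr k u $ j"
  unfolding gr_def by simp

lemma gr_le: "0 \<le> u $ j \<Longrightarrow> gr k u $ j \<le> u $ j"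
  unfolding gr_def using floor_div_bounds(1)[of k "u $ j"] by (cases "k = 0") auto

lemma gr_orthant: "u \<in> orthant \<Longrightarrow> gr k u \<in> orthant"
  unfolding orthant_def using gr_nonneg by auto

lemma meas_snd_nth: "(\<lambda>x. snd x $ j * r) \<in> borel_measurable (M \<Otimes>\<^sub>M (lborel :: (real^'m::finite) measure))"
  by (intro borel_measurable_times measurable_const measurable_compose[OF measurable_snd]) (auto simp add: borel_measurable_nth)

lemma floor_preimage:
  "{x \<in> space (M \<Otimes>\<^sub>M (lborel :: (real^'m::finite) measure)). (\<lambda>j. \<lfloor>snd x $ j * r\<rfloor>) = a} \<in> sets (M \<Otimes>\<^sub>M lborel)"
proof -
  have "{x \<in> space (M \<Otimes>\<^sub>M (lborel :: (real^'m::finite) measure)). (\<lambda>j. \<lfloor>snd x $ j * r\<rfloor>) = a}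
    = (\<Inter>j\<in>UNIV. {x \<in> space (M \<Otimes>\<^sub>M lborel). (\<lambda>x. of_int (a j)) x \<le> (\<lambda>x. snd x $ j * r) x}
         \<inter> {x \<in> space (M \<Otimes>\<^sub>M lborel). (\<lambda>x. snd x $ j * r) x < (\<lambda>x. of_int (a j) + 1) x})"
    by (auto simp: floor_eq_iff fun_eq_iff)
  also have "\<dots> \<in> sets (M \<Otimes>\<^sub>M lborel)"
    by (intro sets.finite_INT finite_UNIV ballI sets.Int borel_measurable_le borel_measurable_less
        meas_snd_nth borel_measurable_const) auto
  finally show ?thesis .
qed
lemma joint_meas:
  fixes F :: "(real^('m::finite)) \<Rightarrow> 'a \<Rightarrow> real"
  assumes meas: "\<And>u. u \<in> orthant \<Longrightarrow> F u \<in> borel_measurable M"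
    and cont: "\<And>\<omega>. \<omega> \<in> space M \<Longrightarrow> continuous_on orthant (\<lambda>u. F u \<omega>)"
  shows "(\<lambda>x. indicator orthant (snd x) * F (snd x) (fst x)) \<in> borel_measurable (M \<Otimes>\<^sub>M lborel)"
proof (rule borel_measurable_LIMSEQ_real)
  let ?f = "\<lambda>k x. indicator orthant (snd x) * F (gr (Suc k) (snd x)) (fst x)"
  show "(\<lambda>k. ?f k x) \<longlonglongrightarrow> indicator orthant (snd x) * F (snd x) (fst x)" if x: "x \<in> space (M \<Otimes>\<^sub>M lborel)" for x
  proof (cases "snd x \<in> orthant")
    case True
    have "fst x \<in> space M" using x by (auto simp add: space_pair_measure)
    have "((\<lambda>u. F u (fst x)) \<circ> (\<lambda>k. gr (Suc k) (snd x))) \<longlonglongrightarrow> F (snd x) (fst x)"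
      by (rule continuous_on_sequentially[THEN iffD1, rule_format, OF cont[OF \<open>fst x \<in> space M\<close>]])
         (use True gr_orthant[OF True] gr_tendsto[of "snd x"] in auto)
    then have "(\<lambda>k. F (gr (Suc k) (snd x)) (fst x)) \<longlonglongrightarrow> F (snd x) (fst x)" by (simp add: comp_def)
    then show ?thesis using True by simp
  qed simp
  show "?f k \<in> borel_measurable (M \<Otimes>\<^sub>M lborel)" for k
  proof -
    define v :: "('m \<Rightarrow> int) \<Rightarrow> real^'m" where "v a = (\<chi> j. real_of_int (a j) / real (Suc k))" for a
    define H where "H a x = indicator orthant (snd x) * (if v a \<in> orthant then F (v a) (fst x) else 0)" for a and x :: "'a \<times> (real^'m)"
    define g where "g x = (\<lambda>j. \<lfloor>snd x $ j * real (Suc k)\<rfloor>)" for x :: "'a \<times> (real^'m)"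
    have eq: "?f k x = H (g x) x" for x
    proof (cases "snd x \<in> orthant")
      case True
      have "v (g x) = gr (Suc k) (snd x)" unfolding v_def g_def gr_def by simp
      then show ?thesis using True gr_orthant[OF True, of "Suc k"] unfolding H_def by simp
    qed (simp add: H_def)
    have "(\<lambda>x. H (g x) x) \<in> borel_measurable (M \<Otimes>\<^sub>M lborel)"
    proof (rule measurable_compose_countable[where f=H and g=g])
      show "H a \<in> borel_measurable (M \<Otimes>\<^sub>M lborel)" for a
      proof (cases "v a \<in> orthant")
        case True
        have oS: "orthant \<in> sets (lborel :: (real^'m) measure)" unfolding orthant_def by measurable
        have "(\<lambda>x. F (v a) (fst x)) \<in> borel_measurable (M \<Otimes>\<^sub>M (lborel :: (real^'m) measure))"
          using meas[OF True] by measurable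
        moreover have "(\<lambda>x. indicator orthant (snd x) :: real) \<in> borel_measurable (M \<Otimes>\<^sub>M (lborel :: (real^'m) measure))"
        proof -
          have "snd -` (orthant :: (real^'m) set) \<inter> space (M \<Otimes>\<^sub>M lborel) \<in> sets (M \<Otimes>\<^sub>M lborel)"
            by (rule measurable_sets[OF measurable_snd oS])
          then have "{x \<in> space (M \<Otimes>\<^sub>M lborel). snd x \<in> (orthant :: (real^'m) set)} \<in> sets (M \<Otimes>\<^sub>M lborel)"
            by (simp add: vimage_def Int_def conj_commute)
          then show ?thesis by (rule borel_measurable_indicator'[where f=snd and A="\<lambda>_. orthant"])
        qed
        ultimately show ?thesis unfolding H_def using True by simp
      qed (simp add: H_def[abs_def])
      have cU: "countable (UNIV :: ('m \<Rightarrow> int) set)" by simp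
      show "g \<in> (M \<Otimes>\<^sub>M lborel) \<rightarrow>\<^sub>M count_space UNIV"
        unfolding measurable_count_space_eq2_countable
        using floor_preimage[of M "real (Suc k)"] by (auto simp: g_def vimage_def Int_def conj_commute)
    qed
    then show ?thesis using eq by simp
  qed
qed
definition boxL :: "nat \<Rightarrow> (real^'m) set" where
  "boxL L = {u. \<forall>j. 0 \<le> u $ j \<and> u $ j \<le> real L}"

lemma boxL_sets: "boxL L \<in> sets (lborel :: (real^'m::finite) measure)"
  unfolding boxL_def by measurable

lemma boxL_bounded: "bounded (boxL L :: (real^'m::finite) set)"
proof -
  have "boxL L \<subseteq> cbox (0::real^'m) (\<chi> j. real L)"
    unfolding boxL_def by (auto simp: mem_box_cart)
  then show ?thesis using bounded_cbox bounded_subset by blast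
qed

lemma boxL_orthant: "boxL L \<subseteq> orthant"
  unfolding boxL_def orthant_def by auto

lemma gr_level_sets: "{u \<in> boxL L. gr k u = v} \<in> sets (lborel :: (real^'m::finite) measure)"
proof -
  have "{u \<in> boxL L. gr k u = v} = boxL L \<inter> (\<Inter>j\<in>UNIV. {u \<in> space (lborel :: (real^'m) measure).
      (\<lambda>u. real_of_int \<lfloor>u $ j * real k\<rfloor> / real k) u = (\<lambda>u. v $ j) u})"
    by (auto simp: gr_def vec_eq_iff)
  also have "\<dots> \<in> sets lborel"
    by (intro sets.Int boxL_sets sets.finite_INT finite_UNIV ballI borel_measurable_eq) auto
  finally show ?thesis .
qed

lemma grid_decomp:
  assumes k: "k > 0"
  obtains G :: "(real^'m::finite) set" and A :: "real^'m \<Rightarrow> (real^'m) set"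
  where "finite G" "G \<subseteq> orthant" "\<And>v. A v \<in> sets lborel" "\<And>v. emeasure lborel (A v) < \<infinity>"
    "\<And>(g :: real^'m \<Rightarrow> real) u. indicator (boxL L) u * g (gr k u) = (\<Sum>v\<in>G. g v * indicator (A v) u)"
proof -
  define P where "P = Pi\<^sub>E (UNIV :: 'm set) (\<lambda>_. {0..int L * int k})"
  define G where "G = (\<lambda>a. (\<chi> j. real_of_int (a j) / real k) :: real^'m) ` P"
  have finG: "finite G" unfolding G_def P_def by (intro finite_imageI finite_PiE) auto
  have grG: "gr k u \<in> G" if u: "u \<in> boxL L" for u :: "real^'m"
  proof -
    have "(\<lambda>j. \<lfloor>u $ j * real k\<rfloor>) \<in> P"
    proof -
      have "0 \<le> \<lfloor>u $ j * real k\<rfloor>" for j using u unfolding boxL_def by auto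
      moreover have "\<lfloor>u $ j * real k\<rfloor> \<le> int L * int k" for j
      proof -
        have "u $ j \<le> real L" using u unfolding boxL_def by auto
        then have "u $ j * real k \<le> real L * real k" by (rule mult_right_mono) simp
        then have "\<lfloor>u $ j * real k\<rfloor> \<le> \<lfloor>real L * real k\<rfloor>" by (rule floor_mono)
        then show ?thesis by (metis floor_of_nat of_nat_mult)
      qed
      ultimately show ?thesis unfolding P_def by (auto simp: PiE_iff)
    qed
    then show ?thesis unfolding G_def gr_def by (rule rev_image_eqI) simp
  qed
  have Gorth: "G \<subseteq> orthant" unfolding G_def P_def orthant_def by (auto simp: PiE_iff)
  define A where "A v = {u \<in> (boxL L :: (real^'m) set). gr k u = v}" for v :: "real^'m"
  have Asets: "A v \<in> sets lborel" for v unfolding A_def by (rule gr_level_sets)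
  have Afin: "emeasure lborel (A v) < \<infinity>" for v
    unfolding A_def by (rule emeasure_bounded_finite) (rule bounded_subset[OF boxL_bounded], auto)
  have eq: "indicator (boxL L) u * g (gr k u) = (\<Sum>v\<in>G. g v * indicator (A v) u)" for g :: "real^'m \<Rightarrow> real" and u
  proof (cases "u \<in> boxL L")
    case True
    have "(\<Sum>v\<in>G. g v * indicator (A v) u) = (\<Sum>v\<in>G. if gr k u = v then g v else 0)"
      using True by (intro sum.cong) (auto simp: A_def indicator_def)
    also have "\<dots> = g (gr k u)" using finG grG[OF True] by (simp add: sum.delta)
    finally show ?thesis using True by simp
  qed (simp add: A_def indicator_def)
  show ?thesis by (rule that[OF finG Gorth Asets Afin eq])
qed

lemma gr_box_meas:
  fixes g :: "real^'m::finite \<Rightarrow> real"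
  assumes k: "k > 0"
  shows "(\<lambda>u. indicator (boxL L) u * g (gr k u)) \<in> borel_measurable (lborel :: (real^'m) measure)"
proof -
  obtain G :: "(real^'m) set" and A where G: "finite G" "G \<subseteq> orthant" "\<And>v. A v \<in> sets lborel" "\<And>v. emeasure lborel (A v) < \<infinity>"
    "\<And>(g :: real^'m \<Rightarrow> real) u. indicator (boxL L) u * g (gr k u) = (\<Sum>v\<in>G. g v * indicator (A v) u)"
    using grid_decomp[OF k, of L] by blast
  have "(\<lambda>u. \<Sum>v\<in>G. g v * indicator (A v) u) \<in> borel_measurable lborel"
    using G(3) by (intro borel_measurable_sum borel_measurable_times borel_measurable_const borel_measurable_indicator) auto
  then show ?thesis using G(5) by simp
qed

lemma riemann_repr:
  assumes k: "k > 0"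
  obtains K :: nat and t and \<mu> :: "nat \<Rightarrow> real" where "\<forall>i<K. t i \<in> (orthant :: (real^'m::finite) set)"
    "\<And>g. (LINT u:boxL L|lborel. g (gr k u)) = (\<Sum>i<K. g (t i) * \<mu> i)"
proof -
  obtain G :: "(real^'m) set" and A where finG: "finite G" and Gorth: "G \<subseteq> orthant"
    and Asets: "\<And>v. A v \<in> sets lborel" and Afin: "\<And>v. emeasure lborel (A v) < \<infinity>"
    and eq: "\<And>(g :: real^'m \<Rightarrow> real) u. indicator (boxL L) u * g (gr k u) = (\<Sum>v\<in>G. g v * indicator (A v) u)"
    using grid_decomp[OF k, of L] by blast
  have repr: "(LINT u:boxL L|lborel. g (gr k u)) = (\<Sum>v\<in>G. g v * measure lborel (A v))" for g :: "real^'m \<Rightarrow> real"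
  proof -
    have "(LINT u:boxL L|lborel. g (gr k u)) = integral\<^sup>L lborel (\<lambda>u. \<Sum>v\<in>G. g v * indicator (A v) u)"
      unfolding set_lebesgue_integral_def using eq by simp
    also have "\<dots> = (\<Sum>v\<in>G. integral\<^sup>L lborel (\<lambda>u. g v * indicator (A v) u))"
      by (rule Bochner_Integration.integral_sum) (auto intro!: integrable_mult_right integrable_real_indicator Asets Afin)
    also have "\<dots> = (\<Sum>v\<in>G. g v * measure lborel (A v))"
      by simp
    finally show ?thesis .
  qed
  obtain t where t: "bij_betw t {0..<card G} G" using ex_bij_betw_nat_finite[OF finG] by blast
  show ?thesis
  proof (rule that[of "card G" t "\<lambda>i. measure lborel (A (t i))"])
    show "\<forall>i<card G. t i \<in> orthant" using t Gorth by (auto simp: bij_betw_def)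
    fix g :: "real^'m \<Rightarrow> real"
    have "(\<Sum>i<card G. g (t i) * measure lborel (A (t i))) = (\<Sum>v\<in>G. g v * measure lborel (A v))"
      using sum.reindex_bij_betw[OF t, of "\<lambda>v. g v * measure lborel (A v)"] by (simp add: lessThan_atLeast0)
    then show "(LINT u:boxL L|lborel. g (gr k u)) = (\<Sum>i<card G. g (t i) * measure lborel (A (t i)))"
      using repr by simp
  qed
qed


lemma boxL_cbox: "boxL L = cbox (0::real^'m::finite) (\<chi> j. real L)"
  unfolding boxL_def by (auto simp: mem_box_cart)

lemma boxL_compact: "compact (boxL L :: (real^'m::finite) set)"
  unfolding boxL_cbox by (rule compact_cbox)

lemma orthant_sets: "orthant \<in> sets (borel :: (real^'m::finite) measure)"
  unfolding orthant_def by measurable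

lemma gr_boxL: "u \<in> boxL L \<Longrightarrow> gr k u \<in> boxL L"
  unfolding boxL_def using gr_nonneg gr_le order_trans by blast

lemma gr_cont_tendsto:
  fixes g :: "real^'m::finite \<Rightarrow> real"
  assumes g: "continuous_on orthant g" and u: "u \<in> orthant"
  shows "(\<lambda>k. g (gr (Suc k) u)) \<longlonglongrightarrow> g u"
proof -
  have "(g \<circ> (\<lambda>k. gr (Suc k) u)) \<longlonglongrightarrow> g u"
    by (rule continuous_on_sequentially[THEN iffD1, rule_format, OF g])
       (use u gr_orthant[OF u] gr_tendsto[of u] in auto)
  then show ?thesis by (simp add: comp_def)
qed

lemma conv_box:
  fixes g :: "real^'m::finite \<Rightarrow> real"
  assumes g: "continuous_on orthant g"
  shows "(\<lambda>k. LINT u:boxL L|lborel. g (gr k u)) \<longlonglongrightarrow> (LINT u:boxL L|lborel. g u)"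
proof -
  have gb: "continuous_on (boxL L) g" using g boxL_orthant continuous_on_subset by blast
  have "compact (g ` boxL L)" by (rule compact_continuous_image[OF gb boxL_compact])
  then obtain B where B: "\<And>u. u \<in> boxL L \<Longrightarrow> \<bar>g u\<bar> \<le> B"
    by (meson compact_imp_bounded bounded_real image_eqI)
  have bs: "boxL L \<in> sets (lborel :: (real^'m) measure)" by (rule boxL_sets)
  have "(\<lambda>k. integral\<^sup>L lborel (\<lambda>u. indicator (boxL L) u * g (gr (Suc k) u))) \<longlonglongrightarrow> integral\<^sup>L lborel (\<lambda>u. indicator (boxL L) u * g u)"
  proof (rule integral_dominated_convergence[where w="\<lambda>u. indicator (boxL L) u * B"])
    show "(\<lambda>u. indicator (boxL L) u * g u) \<in> borel_measurable lborel"
      using borel_measurable_continuous_on_indicator[OF _ gb] bs by simp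
    show "(\<lambda>u. indicator (boxL L) u * g (gr (Suc k) u)) \<in> borel_measurable lborel" for k
      by (rule gr_box_meas) simp
    show "integrable lborel (\<lambda>u::real^'m. indicator (boxL L) u * B)"
      using bs emeasure_bounded_finite[OF boxL_bounded] by (intro integrable_mult_left integrable_real_indicator) auto
    show "AE u in lborel. (\<lambda>k. indicator (boxL L) u * g (gr (Suc k) u)) \<longlonglongrightarrow> indicator (boxL L) u * g u"
    proof (rule AE_I2)
      fix u :: "real^'m"
      show "(\<lambda>k. indicator (boxL L) u * g (gr (Suc k) u)) \<longlonglongrightarrow> indicator (boxL L) u * g u"
      proof (cases "u \<in> boxL L")
        case True
        then have "u \<in> orthant" using boxL_orthant by auto
        then show ?thesis using True gr_cont_tendsto[OF g] by simp
      qed simp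
    qed
    show "AE u in lborel. norm (indicator (boxL L) u * g (gr (Suc k) u)) \<le> indicator (boxL L) u * B" for k
      by (rule AE_I2) (auto simp: indicator_def intro: B gr_boxL)
  qed
  then have "(\<lambda>k. LINT u:boxL L|lborel. g (gr (Suc k) u)) \<longlonglongrightarrow> (LINT u:boxL L|lborel. g u)"
    unfolding set_lebesgue_integral_def by simp
  then show ?thesis by (rule LIMSEQ_imp_Suc)
qed

lemma conv_L:
  fixes g :: "real^'m::finite \<Rightarrow> real"
  assumes g: "continuous_on orthant g" and int: "integrable lborel (\<lambda>u. indicator orthant u * g u)"
  shows "(\<lambda>L. LINT u:boxL L|lborel. g u) \<longlonglongrightarrow> (LINT u:orthant|lborel. g u)"
proof -
  have "(\<lambda>L. integral\<^sup>L lborel (\<lambda>u. indicator (boxL L) u * g u)) \<longlonglongrightarrow> integral\<^sup>L lborel (\<lambda>u. indicator orthant u * g u)"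
  proof (rule integral_dominated_convergence[where w="\<lambda>u. norm (indicator orthant u * g u)"])
    show "(\<lambda>u. indicator orthant u * g u) \<in> borel_measurable lborel"
      using int by auto
    show "(\<lambda>u. indicator (boxL L) u * g u) \<in> borel_measurable lborel" for L
      using borel_measurable_continuous_on_indicator[OF _ continuous_on_subset[OF g boxL_orthant]] boxL_sets[of L] by simp
    show "integrable lborel (\<lambda>u. norm (indicator orthant u * g u))"
      using int by (rule integrable_norm)
    show "AE u in lborel. (\<lambda>L. indicator (boxL L) u * g u) \<longlonglongrightarrow> indicator orthant u * g u"
    proof (rule AE_I2)
      fix u :: "real^'m"
      show "(\<lambda>L. indicator (boxL L) u * g u) \<longlonglongrightarrow> indicator orthant u * g u"
      proof (cases "u \<in> orthant")
        case True
        have "\<forall>\<^sub>F L in sequentially. \<forall>j. u $ j \<le> real L"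
        proof (intro eventually_all_finite allI)
          fix j
          obtain N :: nat where "u $ j \<le> real N" using real_arch_simple by blast
          then show "\<forall>\<^sub>F L in sequentially. u $ j \<le> real L"
            by (intro eventually_sequentiallyI[of N]) auto
        qed
        then have "\<forall>\<^sub>F L in sequentially. indicator (boxL L) u * g u = indicator orthant u * g u"
          by eventually_elim (use True in \<open>auto simp: boxL_def orthant_def indicator_def\<close>)
        then show ?thesis by (rule tendsto_eventually)
      next
        case False
        then have "u \<notin> boxL L" for L using boxL_orthant by auto
        then show ?thesis using False by simp
      qed
    qed
    show "AE u in lborel. norm (indicator (boxL L) u * g u) \<le> norm (indicator orthant u * g u)" for L
      by (rule AE_I2) (use boxL_orthant in \<open>auto simp: indicator_def\<close>)
  qed
  then show ?thesis unfolding set_lebesgue_integral_def by simp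
qed


lemma tail_pw:
  fixes g :: "real^'m::finite \<Rightarrow> real"
  assumes g: "continuous_on orthant g"
  shows "ennreal \<bar>(LINT u:orthant|lborel. g u) - (LINT u:boxL L|lborel. g u)\<bar>
    \<le> (\<Sum>j\<in>UNIV. \<integral>\<^sup>+ u. indicator {u \<in> orthant. real L \<le> u $ j} u * ennreal \<bar>g u\<bar> \<partial>lborel)"
proof -
  define T where "T j = {u \<in> (orthant :: (real^'m) set). real L \<le> u $ j}" for j
  define D where "D = orthant - (boxL L :: (real^'m) set)"
  have os: "orthant \<in> sets (lborel :: (real^'m) measure)" using orthant_sets by simp
  have bs: "boxL L \<in> sets (lborel :: (real^'m) measure)" by (rule boxL_sets)
  have Ts: "T j \<in> sets lborel" for j unfolding T_def orthant_def by measurable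
  have Ds: "D \<in> sets lborel" unfolding D_def using os bs by auto
  have hm: "(\<lambda>u. indicator orthant u * g u) \<in> borel_measurable lborel"
    using borel_measurable_continuous_on_indicator[OF _ g] orthant_sets by simp
  have gm: "(\<lambda>u. indicator A u * ennreal \<bar>g u\<bar>) \<in> borel_measurable lborel" if "A \<subseteq> orthant" "A \<in> sets lborel" for A
  proof -
    have "(\<lambda>u. indicator A u * ennreal \<bar>indicator orthant u * g u\<bar>) \<in> borel_measurable lborel"
      using hm that(2) by measurable
    moreover have "indicator A u * ennreal \<bar>indicator orthant u * g u\<bar> = indicator A u * ennreal \<bar>g u\<bar>" for u
      using that(1) by (auto simp: indicator_def)
    ultimately show ?thesis by simp
  qed
  have Tm: "(\<lambda>u. indicator (T j) u * ennreal \<bar>g u\<bar>) \<in> borel_measurable lborel" for j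
    by (rule gm[OF _ Ts]) (auto simp: T_def)
  define R where "R = (\<integral>\<^sup>+ u. indicator D u * ennreal \<bar>g u\<bar> \<partial>lborel)"
  have RS: "R \<le> (\<Sum>j\<in>UNIV. \<integral>\<^sup>+ u. indicator (T j) u * ennreal \<bar>g u\<bar> \<partial>lborel)"
  proof -
    have "R \<le> (\<integral>\<^sup>+ u. (\<Sum>j\<in>UNIV. indicator (T j) u * ennreal \<bar>g u\<bar>) \<partial>lborel)"
      unfolding R_def
    proof (rule nn_integral_mono)
      fix u :: "real^'m"
      show "indicator D u * ennreal \<bar>g u\<bar> \<le> (\<Sum>j\<in>UNIV. indicator (T j) u * ennreal \<bar>g u\<bar>)"
      proof (cases "u \<in> D")
        case True
        then obtain j where j: "u \<in> T j" unfolding D_def T_def boxL_def orthant_def by (force simp: not_le intro: less_imp_le)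
        have "indicator D u * ennreal \<bar>g u\<bar> = indicator (T j) u * ennreal \<bar>g u\<bar>" using True j by simp
        also have "\<dots> \<le> (\<Sum>j\<in>UNIV. indicator (T j) u * ennreal \<bar>g u\<bar>)"
          by (rule member_le_sum) auto
        finally show ?thesis .
      qed simp
    qed
    also have "\<dots> = (\<Sum>j\<in>UNIV. \<integral>\<^sup>+ u. indicator (T j) u * ennreal \<bar>g u\<bar> \<partial>lborel)"
      by (rule nn_integral_sum) (rule Tm)
    finally show ?thesis .
  qed
  have "ennreal \<bar>(LINT u:orthant|lborel. g u) - (LINT u:boxL L|lborel. g u)\<bar> \<le> R"
  proof (cases "integrable lborel (\<lambda>u. indicator orthant u * g u)")
    case True
    have ib: "integrable lborel (\<lambda>u. indicator (boxL L) u * g u)"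
      using borel_integrable_compact[OF boxL_compact continuous_on_subset[OF g boxL_orthant]] by simp
    have eqd: "indicator orthant u * g u - indicator (boxL L) u * g u = indicator D u * g u" for u
      using boxL_orthant by (auto simp: D_def indicator_def)
    have "(LINT u:orthant|lborel. g u) - (LINT u:boxL L|lborel. g u)
        = integral\<^sup>L lborel (\<lambda>u. indicator orthant u * g u - indicator (boxL L) u * g u)"
      unfolding set_lebesgue_integral_def using True ib by simp
    also have "\<dots> = integral\<^sup>L lborel (\<lambda>u. indicator D u * g u)" by (simp only: eqd)
    finally have "ennreal \<bar>(LINT u:orthant|lborel. g u) - (LINT u:boxL L|lborel. g u)\<bar>
        = ennreal (norm (integral\<^sup>L lborel (\<lambda>u. indicator D u * g u)))" by simp
    also have "\<dots> \<le> (\<integral>\<^sup>+ u. norm (indicator D u * g u) \<partial>lborel)"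
    proof (rule integral_norm_bound_ennreal)
      have "integrable lborel (\<lambda>u. indicator orthant u * g u - indicator (boxL L) u * g u)"
        using True ib by simp
      then show "integrable lborel (\<lambda>u. indicator D u * g u)" by (simp only: eqd)
    qed
    also have "\<dots> = R" unfolding R_def
      by (intro nn_integral_cong) (auto simp: indicator_def)
    finally show ?thesis .
  next
    case False
    then have inf: "(\<integral>\<^sup>+ u. norm (indicator orthant u * g u) \<partial>lborel) = \<infinity>"
      using hm by (simp add: integrable_iff_bounded not_less top_unique)
    have ib: "integrable lborel (\<lambda>u. indicator (boxL L) u * g u)"
      using borel_integrable_compact[OF boxL_compact continuous_on_subset[OF g boxL_orthant]] by simp
    then have fin: "(\<integral>\<^sup>+ u. indicator (boxL L) u * ennreal \<bar>g u\<bar> \<partial>lborel) < \<infinity>"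
      unfolding integrable_iff_bounded by (simp add: abs_mult ennreal_mult' ennreal_indicator)
    have "(\<integral>\<^sup>+ u. norm (indicator orthant u * g u) \<partial>lborel)
        = (\<integral>\<^sup>+ u. indicator (boxL L) u * ennreal \<bar>g u\<bar> + indicator D u * ennreal \<bar>g u\<bar> \<partial>lborel)"
      using boxL_orthant by (intro nn_integral_cong) (auto simp: D_def indicator_def)
    also have "\<dots> = (\<integral>\<^sup>+ u. indicator (boxL L) u * ennreal \<bar>g u\<bar> \<partial>lborel) + R"
      unfolding R_def
      by (rule nn_integral_add) (rule gm[OF boxL_orthant bs], rule gm[OF _ Ds], auto simp: D_def)
    finally have "R = \<infinity>" using inf fin by (auto simp: top_unique ennreal_add_eq_top)
    then show ?thesis by simp
  qed
  then show ?thesis using RS unfolding T_def by simp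
qed

locale rfield =
  fixes P :: "'a measure" and F :: "real^'m::finite \<Rightarrow> 'a \<Rightarrow> real"
  assumes prob: "prob_space P"
    and meas: "\<And>u. u \<in> orthant \<Longrightarrow> F u \<in> borel_measurable P"
    and cont: "\<And>\<omega>. \<omega> \<in> space P \<Longrightarrow> continuous_on orthant (\<lambda>u. F u \<omega>)"
begin

lemma joint: "(\<lambda>x. indicator orthant (snd x) * F (snd x) (fst x)) \<in> borel_measurable (P \<Otimes>\<^sub>M lborel)"
  by (rule joint_meas[OF meas cont])

lemma joint': "(\<lambda>(\<omega>, u). indicator orthant u * F u \<omega>) \<in> borel_measurable (P \<Otimes>\<^sub>M lborel)"
  using joint by (simp add: split_beta')

lemma jointS: "(\<lambda>(u, \<omega>). indicator orthant u * F u \<omega>) \<in> borel_measurable (lborel \<Otimes>\<^sub>M P)"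
proof -
  have "(\<lambda>x. indicator orthant (snd x) * F (snd x) (fst x)) \<in> borel_measurable (P \<Otimes>\<^sub>M lborel)" by (rule joint)
  then have "(\<lambda>(x, y). (\<lambda>p. indicator orthant (fst p) * F (fst p) (snd p)) (y, x)) \<in> borel_measurable (P \<Otimes>\<^sub>M lborel)"
    by (simp add: split_beta')
  then have "(\<lambda>p. indicator orthant (fst p) * F (fst p) (snd p)) \<in> borel_measurable (lborel \<Otimes>\<^sub>M P)"
    by (subst measurable_pair_swap_iff) simp
  then show ?thesis by (simp add: split_beta')
qed

lemma S_meas: "(\<lambda>\<omega>. LINT u:orthant|lborel. F u \<omega>) \<in> borel_measurable P"
  unfolding set_lebesgue_integral_def
  using lborel.borel_measurable_lebesgue_integral[of "\<lambda>\<omega> u. indicator orthant u * F u \<omega>" P] joint' by simp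

lemma XL_meas: "(\<lambda>\<omega>. LINT u:boxL L|lborel. F u \<omega>) \<in> borel_measurable P"
proof -
  have bs: "boxL L \<in> sets (lborel :: (real^'m) measure)" by (rule boxL_sets)
  have "(\<lambda>x. indicator (boxL L) (snd x) * (indicator orthant (snd x) * F (snd x) (fst x))) \<in> borel_measurable (P \<Otimes>\<^sub>M lborel)"
    using joint bs by measurable
  moreover have "indicator (boxL L) (snd x) * (indicator orthant (snd x) * F (snd x) (fst x))
      = indicator (boxL L) (snd x) * F (snd x) (fst x)" for x :: "'a \<times> (real^'m)"
    using boxL_orthant by (auto simp: indicator_def)
  ultimately have "(\<lambda>(\<omega>, u). indicator (boxL L) u * F u \<omega>) \<in> borel_measurable (P \<Otimes>\<^sub>M lborel)"
    by (simp add: split_beta')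
  then show ?thesis
    unfolding set_lebesgue_integral_def
    using lborel.borel_measurable_lebesgue_integral[of "\<lambda>\<omega> u. indicator (boxL L) u * F u \<omega>" P] by simp
qed

lemma XkL_meas:
  assumes k: "k > 0"
  shows "(\<lambda>\<omega>. LINT u:boxL L|lborel. F (gr k u) \<omega>) \<in> borel_measurable P"
proof -
  obtain K :: nat and t and \<mu> :: "nat \<Rightarrow> real" where t: "\<forall>i<K. t i \<in> (orthant :: (real^'m) set)"
    and r: "\<And>g. (LINT u:boxL L|lborel. g (gr k u)) = (\<Sum>i<K. g (t i) * \<mu> i)"
    using riemann_repr[OF k, of L] by blast
  have "(\<lambda>\<omega>. \<Sum>i<K. F (t i) \<omega> * \<mu> i) \<in> borel_measurable P"
    using t meas by (intro borel_measurable_sum borel_measurable_times borel_measurable_const) auto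
  then show ?thesis using r[of "\<lambda>v. F v _"] by simp
qed

lemma conv_k:
  fixes f :: "real \<Rightarrow> real"
  assumes fc: "continuous_on UNIV f" and fb: "\<And>x. \<bar>f x\<bar> \<le> 1"
  shows "(\<lambda>k. \<integral>\<omega>. f (LINT u:boxL L|lborel. F (gr k u) \<omega>) \<partial>P) \<longlonglongrightarrow> (\<integral>\<omega>. f (LINT u:boxL L|lborel. F u \<omega>) \<partial>P)"
proof -
  interpret prob_space P by (rule prob)
  have fm[measurable]: "f \<in> borel_measurable borel" using fc by (rule borel_measurable_continuous_onI)
  have "(\<lambda>k. \<integral>\<omega>. f (LINT u:boxL L|lborel. F (gr (Suc k) u) \<omega>) \<partial>P) \<longlonglongrightarrow> (\<integral>\<omega>. f (LINT u:boxL L|lborel. F u \<omega>) \<partial>P)"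
  proof (rule integral_dominated_convergence[where w="\<lambda>_. 1"])
    show "(\<lambda>\<omega>. f (LINT u:boxL L|lborel. F u \<omega>)) \<in> borel_measurable P"
      using XL_meas by measurable
    show "(\<lambda>\<omega>. f (LINT u:boxL L|lborel. F (gr (Suc k) u) \<omega>)) \<in> borel_measurable P" for k
      using XkL_meas[of "Suc k" L] by measurable
    show "integrable P (\<lambda>_. 1::real)" by simp
    show "AE \<omega> in P. (\<lambda>k. f (LINT u:boxL L|lborel. F (gr (Suc k) u) \<omega>)) \<longlonglongrightarrow> f (LINT u:boxL L|lborel. F u \<omega>)"
    proof (rule AE_I2)
      fix \<omega> assume w: "\<omega> \<in> space P"
      have "(\<lambda>k. LINT u:boxL L|lborel. F (gr k u) \<omega>) \<longlonglongrightarrow> (LINT u:boxL L|lborel. F u \<omega>)"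
        by (rule conv_box[OF cont[OF w]])
      then have "(\<lambda>k. LINT u:boxL L|lborel. F (gr (Suc k) u) \<omega>) \<longlonglongrightarrow> (LINT u:boxL L|lborel. F u \<omega>)"
        by (rule LIMSEQ_Suc)
      then show "(\<lambda>k. f (LINT u:boxL L|lborel. F (gr (Suc k) u) \<omega>)) \<longlonglongrightarrow> f (LINT u:boxL L|lborel. F u \<omega>)"
        by (rule continuous_on_tendsto_compose[OF fc]) auto
    qed
    show "AE \<omega> in P. norm (f (LINT u:boxL L|lborel. F (gr (Suc k) u) \<omega>)) \<le> 1" for k
      using fb by simp
  qed
  then show ?thesis by (rule LIMSEQ_imp_Suc)
qed

lemma AE_integrable:
  assumes intF: "(\<integral>\<^sup>+ u. indicator orthant u * (\<integral>\<^sup>+ \<omega>. ennreal \<bar>F u \<omega>\<bar> \<partial>P) \<partial>lborel) < \<infinity>"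
  shows "AE \<omega> in P. integrable lborel (\<lambda>u. indicator orthant u * F u \<omega>)"
proof -
  interpret prob_space P by (rule prob)
  interpret pair_sigma_finite P lborel by unfold_locales
  have jm: "(\<lambda>(\<omega>, u). ennreal \<bar>indicator orthant u * F u \<omega>\<bar>) \<in> borel_measurable (P \<Otimes>\<^sub>M lborel)"
    using joint' by (simp add: split_beta') measurable
  have "(\<integral>\<^sup>+ \<omega>. (\<integral>\<^sup>+ u. ennreal \<bar>indicator orthant u * F u \<omega>\<bar> \<partial>lborel) \<partial>P)
      = (\<integral>\<^sup>+ u. (\<integral>\<^sup>+ \<omega>. ennreal \<bar>indicator orthant u * F u \<omega>\<bar> \<partial>P) \<partial>lborel)"
    using Fubini'[OF jm] by simp
  also have "\<dots> = (\<integral>\<^sup>+ u. indicator orthant u * (\<integral>\<^sup>+ \<omega>. ennreal \<bar>F u \<omega>\<bar> \<partial>P) \<partial>lborel)"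
  proof (rule nn_integral_cong)
    fix u :: "real^'m"
    show "(\<integral>\<^sup>+ \<omega>. ennreal \<bar>indicator orthant u * F u \<omega>\<bar> \<partial>P) = indicator orthant u * (\<integral>\<^sup>+ \<omega>. ennreal \<bar>F u \<omega>\<bar> \<partial>P)"
      by (cases "u \<in> orthant") auto
  qed
  finally have fin: "(\<integral>\<^sup>+ \<omega>. (\<integral>\<^sup>+ u. ennreal \<bar>indicator orthant u * F u \<omega>\<bar> \<partial>lborel) \<partial>P) \<noteq> \<infinity>"
    using intF by simp
  have "AE \<omega> in P. (\<integral>\<^sup>+ u. ennreal \<bar>indicator orthant u * F u \<omega>\<bar> \<partial>lborel) \<noteq> \<infinity>"
    by (rule nn_integral_PInf_AE[OF _ fin]) (rule lborel.borel_measurable_nn_integral[OF jm])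
  then show ?thesis
  proof (rule AE_mp[OF _ AE_I2], intro impI)
    fix \<omega> assume w: "\<omega> \<in> space P" and f: "(\<integral>\<^sup>+ u. ennreal \<bar>indicator orthant u * F u \<omega>\<bar> \<partial>lborel) \<noteq> \<infinity>"
    have hm: "(\<lambda>u. indicator orthant u * F u \<omega>) \<in> borel_measurable lborel"
      using borel_measurable_continuous_on_indicator[OF _ cont[OF w]] orthant_sets by simp
    then show "integrable lborel (\<lambda>u. indicator orthant u * F u \<omega>)"
      using f by (simp add: integrable_iff_bounded less_top)
  qed
qed

lemma conv_Lf:
  fixes f :: "real \<Rightarrow> real"
  assumes fc: "continuous_on UNIV f" and fb: "\<And>x. \<bar>f x\<bar> \<le> 1"
    and intF: "(\<integral>\<^sup>+ u. indicator orthant u * (\<integral>\<^sup>+ \<omega>. ennreal \<bar>F u \<omega>\<bar> \<partial>P) \<partial>lborel) < \<infinity>"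
  shows "(\<lambda>L. \<integral>\<omega>. f (LINT u:boxL L|lborel. F u \<omega>) \<partial>P) \<longlonglongrightarrow> (\<integral>\<omega>. f (LINT u:orthant|lborel. F u \<omega>) \<partial>P)"
proof -
  interpret prob_space P by (rule prob)
  have fm[measurable]: "f \<in> borel_measurable borel" using fc by (rule borel_measurable_continuous_onI)
  show ?thesis
  proof (rule integral_dominated_convergence[where w="\<lambda>_. 1"])
    show "(\<lambda>\<omega>. f (LINT u:orthant|lborel. F u \<omega>)) \<in> borel_measurable P"
      using S_meas by measurable
    show "(\<lambda>\<omega>. f (LINT u:boxL L|lborel. F u \<omega>)) \<in> borel_measurable P" for L
      using XL_meas[of L] by measurable
    show "integrable P (\<lambda>_. 1::real)" by simp
    show "AE \<omega> in P. (\<lambda>L. f (LINT u:boxL L|lborel. F u \<omega>)) \<longlonglongrightarrow> f (LINT u:orthant|lborel. F u \<omega>)"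
      using AE_integrable[OF intF]
    proof (rule AE_mp[OF _ AE_I2], intro impI)
      fix \<omega> assume w: "\<omega> \<in> space P" and i: "integrable lborel (\<lambda>u. indicator orthant u * F u \<omega>)"
      have "(\<lambda>L. LINT u:boxL L|lborel. F u \<omega>) \<longlonglongrightarrow> (LINT u:orthant|lborel. F u \<omega>)"
        by (rule conv_L[OF cont[OF w] i])
      then show "(\<lambda>L. f (LINT u:boxL L|lborel. F u \<omega>)) \<longlonglongrightarrow> f (LINT u:orthant|lborel. F u \<omega>)"
        by (rule continuous_on_tendsto_compose[OF fc]) auto
    qed
    show "AE \<omega> in P. norm (f (LINT u:boxL L|lborel. F u \<omega>)) \<le> 1" for L
      using fb by simp
  qed
qed

lemma tailconv:
  assumes intF: "(\<integral>\<^sup>+ u. indicator orthant u * (\<integral>\<^sup>+ \<omega>. ennreal \<bar>F u \<omega>\<bar> \<partial>P) \<partial>lborel) < \<infinity>"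
    and T: "T \<subseteq> orthant" "T \<in> sets lborel"
  shows "(\<integral>\<^sup>+ u. (\<integral>\<^sup>+ \<omega>. indicator T u * ennreal \<bar>F u \<omega>\<bar> \<partial>P) \<partial>lborel)
    = ennreal (LINT u:T|lborel. (\<integral>\<omega>. \<bar>F u \<omega>\<bar> \<partial>P))"
proof -
  interpret prob_space P by (rule prob)
  define h where "h u = indicator T u * (\<integral>\<omega>. \<bar>F u \<omega>\<bar> \<partial>P)" for u :: "real^'m"
  have jS: "(\<lambda>(u, \<omega>). \<bar>indicator orthant u * F u \<omega>\<bar>) \<in> borel_measurable (lborel \<Otimes>\<^sub>M P)"
    using jointS by (simp add: split_beta') measurable
  have jS': "(\<lambda>(u, \<omega>). ennreal \<bar>indicator orthant u * F u \<omega>\<bar>) \<in> borel_measurable (lborel \<Otimes>\<^sub>M P)"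
    using jointS by (simp add: split_beta') measurable
  have "(\<lambda>u. \<integral>\<omega>. \<bar>indicator orthant u * F u \<omega>\<bar> \<partial>P) \<in> borel_measurable lborel"
    by (rule borel_measurable_lebesgue_integral[OF jS])
  then have "(\<lambda>u. indicator T u * (\<integral>\<omega>. \<bar>indicator orthant u * F u \<omega>\<bar> \<partial>P)) \<in> borel_measurable lborel"
    using T(2) by measurable
  moreover have "indicator T u * (\<integral>\<omega>. \<bar>indicator orthant u * F u \<omega>\<bar> \<partial>P) = h u" for u
    using T(1) by (auto simp: h_def indicator_def)
  ultimately have hm: "h \<in> borel_measurable lborel" by simp
  have em: "(\<lambda>u. \<integral>\<^sup>+ \<omega>. ennreal \<bar>indicator orthant u * F u \<omega>\<bar> \<partial>P) \<in> borel_measurable lborel"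
    by (rule borel_measurable_nn_integral[OF jS'])
  have eq2: "(\<integral>\<^sup>+ \<omega>. ennreal \<bar>indicator orthant u * F u \<omega>\<bar> \<partial>P) = indicator orthant u * (\<integral>\<^sup>+ \<omega>. ennreal \<bar>F u \<omega>\<bar> \<partial>P)" for u
    by (cases "u \<in> orthant") auto
  have "AE u in lborel. (\<integral>\<^sup>+ \<omega>. ennreal \<bar>indicator orthant u * F u \<omega>\<bar> \<partial>P) \<noteq> \<infinity>"
    by (rule nn_integral_PInf_AE[OF em]) (use intF in \<open>simp add: eq2\<close>)
  then have ae: "AE u in lborel. (\<integral>\<^sup>+ \<omega>. indicator T u * ennreal \<bar>F u \<omega>\<bar> \<partial>P) = ennreal (h u)"
  proof (rule AE_mp[OF _ AE_I2], intro impI)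
    fix u :: "real^'m" assume fin: "(\<integral>\<^sup>+ \<omega>. ennreal \<bar>indicator orthant u * F u \<omega>\<bar> \<partial>P) \<noteq> \<infinity>"
    show "(\<integral>\<^sup>+ \<omega>. indicator T u * ennreal \<bar>F u \<omega>\<bar> \<partial>P) = ennreal (h u)"
    proof (cases "u \<in> T")
      case True
      then have uo: "u \<in> orthant" using T(1) by auto
      have "integrable P (\<lambda>\<omega>. \<bar>F u \<omega>\<bar>)"
        using fin uo meas[OF uo] by (simp add: integrable_iff_bounded less_top)
      then have "(\<integral>\<^sup>+ \<omega>. ennreal \<bar>F u \<omega>\<bar> \<partial>P) = ennreal (\<integral>\<omega>. \<bar>F u \<omega>\<bar> \<partial>P)"
        by (rule nn_integral_eq_integral) simp
      then show ?thesis using True by (simp add: h_def)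
    qed (simp add: h_def)
  qed
  then have eqh: "(\<integral>\<^sup>+ u. (\<integral>\<^sup>+ \<omega>. indicator T u * ennreal \<bar>F u \<omega>\<bar> \<partial>P) \<partial>lborel) = (\<integral>\<^sup>+ u. ennreal (h u) \<partial>lborel)"
    by (rule nn_integral_cong_AE)
  have "(\<integral>\<^sup>+ u. (\<integral>\<^sup>+ \<omega>. indicator T u * ennreal \<bar>F u \<omega>\<bar> \<partial>P) \<partial>lborel)
      \<le> (\<integral>\<^sup>+ u. indicator orthant u * (\<integral>\<^sup>+ \<omega>. ennreal \<bar>F u \<omega>\<bar> \<partial>P) \<partial>lborel)"
  proof (rule nn_integral_mono)
    fix u :: "real^'m"
    show "(\<integral>\<^sup>+ \<omega>. indicator T u * ennreal \<bar>F u \<omega>\<bar> \<partial>P) \<le> indicator orthant u * (\<integral>\<^sup>+ \<omega>. ennreal \<bar>F u \<omega>\<bar> \<partial>P)"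
      using T(1) by (cases "u \<in> T") (auto simp: indicator_def)
  qed
  then have hfin: "(\<integral>\<^sup>+ u. ennreal (h u) \<partial>lborel) < \<infinity>" using intF eqh by simp
  have hnn: "h u \<ge> 0" for u unfolding h_def by (auto intro!: integral_nonneg_AE)
  have hi: "integrable lborel h"
    using hm hfin hnn by (simp add: integrable_iff_bounded)
  have "(\<integral>\<^sup>+ u. ennreal (h u) \<partial>lborel) = ennreal (integral\<^sup>L lborel h)"
    by (rule nn_integral_eq_integral[OF hi]) (simp add: hnn)
  moreover have "integral\<^sup>L lborel h = (LINT u:T|lborel. (\<integral>\<omega>. \<bar>F u \<omega>\<bar> \<partial>P))"
    unfolding set_lebesgue_integral_def h_def by simp
  ultimately show ?thesis using eqh by simp
qed

lemma tail_prob: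
  assumes e: "e > 0"
    and intF: "(\<integral>\<^sup>+ u. indicator orthant u * (\<integral>\<^sup>+ \<omega>. ennreal \<bar>F u \<omega>\<bar> \<partial>P) \<partial>lborel) < \<infinity>"
  shows "e * measure P {\<omega> \<in> space P. \<bar>(LINT u:orthant|lborel. F u \<omega>) - (LINT u:boxL L|lborel. F u \<omega>)\<bar> > e}
     \<le> (\<Sum>j\<in>UNIV. LINT u:{u \<in> orthant. real L \<le> u $ j}|lborel. (\<integral>\<omega>. \<bar>F u \<omega>\<bar> \<partial>P))"
proof -
  interpret prob_space P by (rule prob)
  interpret pair_sigma_finite P lborel by unfold_locales
  define d where "d \<omega> = \<bar>(LINT u:orthant|lborel. F u \<omega>) - (LINT u:boxL L|lborel. F u \<omega>)\<bar>" for \<omega>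
  define A where "A = {\<omega> \<in> space P. d \<omega> > e}"
  define T where "T j = {u \<in> (orthant :: (real^'m) set). real L \<le> u $ j}" for j
  define tl where "tl j = (LINT u:T j|lborel. (\<integral>\<omega>. \<bar>F u \<omega>\<bar> \<partial>P))" for j
  have dm[measurable]: "d \<in> borel_measurable P" unfolding d_def using S_meas XL_meas by measurable
  have As: "A \<in> sets P" unfolding A_def by measurable
  have Ts: "T j \<in> sets lborel" for j unfolding T_def orthant_def by measurable
  have TO: "T j \<subseteq> orthant" for j unfolding T_def by auto
  have jm: "(\<lambda>(\<omega>, u). indicator (T j) u * ennreal \<bar>F u \<omega>\<bar>) \<in> borel_measurable (P \<Otimes>\<^sub>M lborel)" for j
  proof -
    have "(\<lambda>x. indicator (T j) (snd x) * ennreal \<bar>indicator orthant (snd x) * F (snd x) (fst x)\<bar>) \<in> borel_measurable (P \<Otimes>\<^sub>M lborel)"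
      using joint Ts[of j] by measurable
    moreover have "indicator (T j) (snd x) * ennreal \<bar>indicator orthant (snd x) * F (snd x) (fst x)\<bar>
        = indicator (T j) (snd x) * ennreal \<bar>F (snd x) (fst x)\<bar>" for x :: "'a \<times> (real^'m)"
      using TO[of j] by (auto simp: indicator_def)
    ultimately show ?thesis by (simp add: split_beta')
  qed
  have "ennreal e * emeasure P A = (\<integral>\<^sup>+ \<omega>. ennreal e * indicator A \<omega> \<partial>P)"
    by (rule nn_integral_cmult_indicator[OF As, symmetric])
  also have "\<dots> \<le> (\<integral>\<^sup>+ \<omega>. ennreal (d \<omega>) \<partial>P)"
    by (rule nn_integral_mono) (auto simp: A_def indicator_def intro: ennreal_leI)
  also have "\<dots> \<le> (\<integral>\<^sup>+ \<omega>. (\<Sum>j\<in>UNIV. \<integral>\<^sup>+ u. indicator (T j) u * ennreal \<bar>F u \<omega>\<bar> \<partial>lborel) \<partial>P)"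
    by (rule nn_integral_mono) (unfold d_def T_def, rule tail_pw[OF cont])
  also have "\<dots> = (\<Sum>j\<in>UNIV. \<integral>\<^sup>+ \<omega>. (\<integral>\<^sup>+ u. indicator (T j) u * ennreal \<bar>F u \<omega>\<bar> \<partial>lborel) \<partial>P)"
    by (rule nn_integral_sum) (rule lborel.borel_measurable_nn_integral[OF jm])
  also have "\<dots> = (\<Sum>j\<in>UNIV. \<integral>\<^sup>+ u. (\<integral>\<^sup>+ \<omega>. indicator (T j) u * ennreal \<bar>F u \<omega>\<bar> \<partial>P) \<partial>lborel)"
    using Fubini'[OF jm] by simp
  also have "\<dots> = (\<Sum>j\<in>UNIV. ennreal (tl j))"
    unfolding tl_def by (intro sum.cong refl tailconv[OF intF TO Ts])
  also have "\<dots> = ennreal (\<Sum>j\<in>UNIV. tl j)"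
  proof (rule sum_ennreal)
    fix j show "0 \<le> tl j" unfolding tl_def set_lebesgue_integral_def
      by (auto intro!: integral_nonneg_AE simp: indicator_def)
  qed
  finally have "ennreal (e * measure P A) \<le> ennreal (\<Sum>j\<in>UNIV. tl j)"
    using e by (simp add: emeasure_eq_measure ennreal_mult)
  moreover have "0 \<le> (\<Sum>j\<in>UNIV. tl j)"
    unfolding tl_def set_lebesgue_integral_def
    by (auto intro!: sum_nonneg integral_nonneg_AE simp: indicator_def)
  ultimately have "e * measure P A \<le> (\<Sum>j\<in>UNIV. tl j)" by (simp add: ennreal_le_iff)
  then show ?thesis unfolding A_def d_def tl_def T_def by simp
qed

end

lemma lip_est:
  fixes f :: "real \<Rightarrow> real"
  assumes P: "prob_space P" and a: "a \<in> borel_measurable P" and b: "b \<in> borel_measurable P"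
    and fb: "\<And>x. \<bar>f x\<bar> \<le> 1" and fl: "\<And>x y. \<bar>f x - f y\<bar> \<le> C * \<bar>x - y\<bar>"
    and fc: "continuous_on UNIV f" and C: "C \<ge> 0" and e: "e > 0"
  shows "\<bar>(\<integral>\<omega>. f (a \<omega>) \<partial>P) - (\<integral>\<omega>. f (b \<omega>) \<partial>P)\<bar>
     \<le> C * e + 2 * measure P {\<omega> \<in> space P. \<bar>a \<omega> - b \<omega>\<bar> > e}"
proof -
  interpret prob_space P by (rule P)
  have fm[measurable]: "f \<in> borel_measurable borel" using fc by (rule borel_measurable_continuous_onI)
  note [measurable] = a b
  define S where "S = {\<omega> \<in> space P. \<bar>a \<omega> - b \<omega>\<bar> > e}"
  have S[measurable]: "S \<in> sets P" unfolding S_def by (intro borel_measurable_less borel_measurable_const borel_measurable_abs borel_measurable_diff a b)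
  have ia: "integrable P (\<lambda>\<omega>. f (a \<omega>))" by (rule integrable_const_bound[of _ 1]) (auto simp: fb)
  have ib: "integrable P (\<lambda>\<omega>. f (b \<omega>))" by (rule integrable_const_bound[of _ 1]) (auto simp: fb)
  have "\<bar>(\<integral>\<omega>. f (a \<omega>) \<partial>P) - (\<integral>\<omega>. f (b \<omega>) \<partial>P)\<bar> = \<bar>\<integral>\<omega>. f (a \<omega>) - f (b \<omega>) \<partial>P\<bar>"
    using ia ib by simp
  also have "\<dots> \<le> (\<integral>\<omega>. \<bar>f (a \<omega>) - f (b \<omega>)\<bar> \<partial>P)"
    by (rule integral_abs_bound[unfolded real_norm_def])
  also have "\<dots> \<le> (\<integral>\<omega>. C * e + 2 * indicator S \<omega> \<partial>P)"
  proof (rule integral_mono)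
    show "integrable P (\<lambda>\<omega>. \<bar>f (a \<omega>) - f (b \<omega>)\<bar>)" using ia ib by auto
    show "integrable P (\<lambda>\<omega>. C * e + 2 * indicator S \<omega>)"
      using S by (intro Bochner_Integration.integrable_add integrable_mult_right integrable_real_indicator) (auto simp: emeasure_eq_measure)
    fix \<omega> assume w: "\<omega> \<in> space P"
    show "\<bar>f (a \<omega>) - f (b \<omega>)\<bar> \<le> C * e + 2 * indicator S \<omega>"
    proof (cases "\<omega> \<in> S")
      case True
      have "\<bar>f (a \<omega>) - f (b \<omega>)\<bar> \<le> 2" using fb[of "a \<omega>"] fb[of "b \<omega>"] by linarith
      moreover have "C * e \<ge> 0" using C e by simp
      ultimately show ?thesis using True by (simp add: indicator_def)
    next
      case False
      then have "\<bar>a \<omega> - b \<omega>\<bar> \<le> e" using w unfolding S_def by auto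
      then have "C * \<bar>a \<omega> - b \<omega>\<bar> \<le> C * e" using C by (rule mult_left_mono)
      then show ?thesis using fl[of "a \<omega>" "b \<omega>"] False by (simp add: indicator_def)
    qed
  qed
  also have "\<dots> = C * e + 2 * measure P S"
    using S by (subst Bochner_Integration.integral_add) (auto intro!: integrable_real_indicator simp: emeasure_eq_measure prob_space)
  finally show ?thesis unfolding S_def .
qed

lemma fdd_riemann:
  fixes M :: "nat \<Rightarrow> 'a measure" and N :: "'b measure"
    and Y :: "nat \<Rightarrow> real ^ 'm::finite \<Rightarrow> 'a \<Rightarrow> real"
    and Z :: "real ^ 'm \<Rightarrow> 'b \<Rightarrow> real" and f :: "real \<Rightarrow> real"
  assumes fdd: "fdd_conv M Y N Z orthant" and k: "k > 0"
    and fc: "continuous_on UNIV f" and fb: "\<And>x. \<bar>f x\<bar> \<le> 1"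
  shows "(\<lambda>n. \<integral>\<omega>. f (LINT u:boxL L|lborel. Y n (gr k u) \<omega>) \<partial>M n)
     \<longlonglongrightarrow> (\<integral>\<omega>. f (LINT u:boxL L|lborel. Z (gr k u) \<omega>) \<partial>N)"
proof -
  obtain K :: nat and t and \<mu> :: "nat \<Rightarrow> real" where t: "\<forall>i<K. t i \<in> (orthant :: (real^'m) set)"
    and r: "\<And>g. (LINT u:boxL L|lborel. g (gr k u)) = (\<Sum>i<K. g (t i) * \<mu> i)"
    using riemann_repr[OF k, of L] by blast
  have cd: "conv_distr M (\<lambda>n \<omega>. (\<lambda>i. if i < K then Y n (t i) \<omega> else 0))
                   N (\<lambda>\<omega>. (\<lambda>i. if i < K then Z (t i) \<omega> else 0))"
    using fdd t unfolding fdd_conv_def by blast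
  define f' where "f' v = f (\<Sum>i<K. v i * \<mu> i)" for v :: "nat \<Rightarrow> real"
  have c1: "continuous_on UNIV (\<lambda>v::nat \<Rightarrow> real. \<Sum>i<K. v i * \<mu> i)"
    by (intro continuous_on_sum continuous_on_mult_right continuous_on_product_coordinates)
  have c2: "continuous_on UNIV f'"
    unfolding f'_def by (rule continuous_on_compose2[OF fc c1]) auto
  have b2: "bounded (range f')"
    unfolding bounded_iff by (rule exI[of _ 1]) (auto simp: f'_def fb)
  have "(\<lambda>n. \<integral>\<omega>. f' (\<lambda>i. if i < K then Y n (t i) \<omega> else 0) \<partial>M n)
     \<longlonglongrightarrow> (\<integral>\<omega>. f' (\<lambda>i. if i < K then Z (t i) \<omega> else 0) \<partial>N)"
    using cd c2 b2 unfolding conv_distr_def by blast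
  moreover have "f' (\<lambda>i. if i < K then Y n (t i) \<omega> else 0) = f (LINT u:boxL L|lborel. Y n (gr k u) \<omega>)" for n \<omega>
    unfolding f'_def r[of "\<lambda>v. Y n v \<omega>"] by (intro arg_cong[where f=f] sum.cong) auto
  moreover have "f' (\<lambda>i. if i < K then Z (t i) \<omega> else 0) = f (LINT u:boxL L|lborel. Z (gr k u) \<omega>)" for \<omega>
    unfolding f'_def r[of "\<lambda>v. Z v \<omega>"] by (intro arg_cong[where f=f] sum.cong) auto
  ultimately show ?thesis by simp
qed

lemma cts_step_alt: "a < b \<Longrightarrow> cts_step a b x = max 0 (min 1 ((b - x) / (b - a)))"
  unfolding cts_step_def by (auto simp: field_simps)

lemma clamp_lip: "\<bar>max 0 (min 1 s) - max 0 (min 1 t)\<bar> \<le> \<bar>s - t\<bar>" for s t :: real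
  by (simp add: max_def min_def abs_le_iff) arith

lemma cts_step_props:
  assumes ab: "a < b"
  shows "\<bar>cts_step a b x\<bar> \<le> 1" "continuous_on UNIV (cts_step a b)"
    "\<bar>cts_step a b x - cts_step a b y\<bar> \<le> (1 / (b - a)) * \<bar>x - y\<bar>"
proof -
  show "\<bar>cts_step a b x\<bar> \<le> 1" using ab by (simp add: cts_step_alt)
  show "continuous_on UNIV (cts_step a b)"
    by (rule uniformly_continuous_imp_continuous[OF cts_step_uniformly_continuous[OF ab]])
  have "\<bar>cts_step a b x - cts_step a b y\<bar> \<le> \<bar>(b - x) / (b - a) - (b - y) / (b - a)\<bar>"
    unfolding cts_step_alt[OF ab] by (rule clamp_lip)
  also have "\<dots> = (1 / (b - a)) * \<bar>x - y\<bar>"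
    using ab by (simp add: diff_divide_distrib[symmetric] abs_div abs_minus_commute)
  finally show "\<bar>cts_step a b x - cts_step a b y\<bar> \<le> (1 / (b - a)) * \<bar>x - y\<bar>" .
qed


lemma main_conv:
  fixes M :: "nat \<Rightarrow> 'a measure" and N :: "'b measure"
    and Y :: "nat \<Rightarrow> real ^ 'm::finite \<Rightarrow> 'a \<Rightarrow> real"
    and Z :: "real ^ 'm \<Rightarrow> 'b \<Rightarrow> real" and f :: "real \<Rightarrow> real" and C :: real
  assumes probM: "\<And>n. prob_space (M n)"
    and probN: "prob_space N"
    and measY: "\<And>n u. u \<in> orthant \<Longrightarrow> Y n u \<in> borel_measurable (M n)"
    and measZ: "\<And>u. u \<in> orthant \<Longrightarrow> Z u \<in> borel_measurable N"
    and contY: "\<And>n \<omega>. \<omega> \<in> space (M n) \<Longrightarrow> continuous_on orthant (\<lambda>u. Y n u \<omega>)"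
    and contZ: "\<And>\<omega>. \<omega> \<in> space N \<Longrightarrow> continuous_on orthant (\<lambda>u. Z u \<omega>)"
    and fdd: "fdd_conv M Y N Z orthant"
    and intY: "\<And>n. (\<integral>\<^sup>+ u. indicator orthant u * (\<integral>\<^sup>+ \<omega>. ennreal \<bar>Y n u \<omega>\<bar> \<partial>M n) \<partial>lborel) < \<infinity>"
    and intZ: "(\<integral>\<^sup>+ u. indicator orthant u * (\<integral>\<^sup>+ \<omega>. ennreal \<bar>Z u \<omega>\<bar> \<partial>N) \<partial>lborel) < \<infinity>"
    and tails: "\<And>j. (\<lambda>L::nat. limsup (\<lambda>n. ereal
                   (LINT u:{u \<in> orthant. real L \<le> u $ j}|lborel. (\<integral>\<omega>. \<bar>Y n u \<omega>\<bar> \<partial>M n))))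
                 \<longlonglongrightarrow> 0"
    and discr: "\<And>(eps::real) (L::nat). eps > 0 \<Longrightarrow> L > 0 \<Longrightarrow>
        (\<lambda>k::nat. limsup (\<lambda>n. ereal (measure (M n)
           {\<omega> \<in> space (M n).
              \<bar>(LINT u:boxL L|lborel. Y n (gr k u) \<omega>)
               - (LINT u:boxL L|lborel. Y n u \<omega>)\<bar> > eps})))
        \<longlonglongrightarrow> 0"
    and fc: "continuous_on UNIV f" and fb: "\<And>x. \<bar>f x\<bar> \<le> 1"
    and fl: "\<And>x y. \<bar>f x - f y\<bar> \<le> C * \<bar>x - y\<bar>" and C: "C \<ge> 0"
  shows "(\<lambda>n. \<integral>\<omega>. f (LINT u:orthant|lborel. Y n u \<omega>) \<partial>M n) \<longlonglongrightarrow> (\<integral>\<omega>. f (LINT u:orthant|lborel. Z u \<omega>) \<partial>N)"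
  unfolding tendsto_iff dist_real_def
proof (intro allI impI)
  fix r :: real assume r: "r > 0"
  have RY: "rfield (M n) (Y n)" for n by (rule rfield.intro) (auto intro: probM measY contY)
  have RZ: "rfield N Z" by (rule rfield.intro) (auto intro: probN measZ contZ)
  define \<eta> where "\<eta> = r / 8"
  have \<eta>: "\<eta> > 0" using r by (simp add: \<eta>_def)
  define \<epsilon> where "\<epsilon> = \<eta> / (C + 1)"
  have \<epsilon>: "\<epsilon> > 0" using \<eta> C by (simp add: \<epsilon>_def)
  have C\<epsilon>: "C * \<epsilon> \<le> \<eta>"
  proof -
    have "C * \<epsilon> = \<eta> * (C / (C + 1))" by (simp add: \<epsilon>_def)
    also have "\<dots> \<le> \<eta> * 1" using C \<eta> by (intro mult_left_mono) auto
    finally show ?thesis by simp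
  qed
  define cm where "cm = real CARD('m)"
  have cm: "cm > 0" by (simp add: cm_def)
  define \<delta> where "\<delta> = \<eta> * \<epsilon> / (2 * cm)"
  have \<delta>: "\<delta> > 0" using \<eta> \<epsilon> cm by (simp add: \<delta>_def)
  have cm\<delta>: "cm * \<delta> = \<eta> * \<epsilon> / 2" using cm by (simp add: \<delta>_def)

  have evL1: "\<forall>\<^sub>F L in sequentially. \<forall>j. limsup (\<lambda>n. ereal
                   (LINT u:{u \<in> orthant. real L \<le> u $ j}|lborel. (\<integral>\<omega>. \<bar>Y n u \<omega>\<bar> \<partial>M n))) < ereal \<delta>"
    by (intro eventually_all_finite allI order_tendstoD(2)[OF tails]) (simp add: \<delta>)
  have evL2: "\<forall>\<^sub>F L in sequentially. \<bar>(\<integral>\<omega>. f (LINT u:boxL L|lborel. Z u \<omega>) \<partial>N) - (\<integral>\<omega>. f (LINT u:orthant|lborel. Z u \<omega>) \<partial>N)\<bar> < \<eta>"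
    using tendstoD[OF rfield.conv_Lf[OF RZ fc fb intZ] \<eta>] by (simp add: dist_real_def)
  have "\<forall>\<^sub>F L in sequentially. (\<forall>j. limsup (\<lambda>n. ereal
                   (LINT u:{u \<in> orthant. real L \<le> u $ j}|lborel. (\<integral>\<omega>. \<bar>Y n u \<omega>\<bar> \<partial>M n))) < ereal \<delta>)
      \<and> \<bar>(\<integral>\<omega>. f (LINT u:boxL L|lborel. Z u \<omega>) \<partial>N) - (\<integral>\<omega>. f (LINT u:orthant|lborel. Z u \<omega>) \<partial>N)\<bar> < \<eta>
      \<and> 0 < L"
    using evL1 evL2 eventually_gt_at_top[of 0] by eventually_elim auto
  then obtain L :: nat where L1: "\<And>j. limsup (\<lambda>n. ereal
                   (LINT u:{u \<in> orthant. real L \<le> u $ j}|lborel. (\<integral>\<omega>. \<bar>Y n u \<omega>\<bar> \<partial>M n))) < ereal \<delta>"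
    and L2: "\<bar>(\<integral>\<omega>. f (LINT u:boxL L|lborel. Z u \<omega>) \<partial>N) - (\<integral>\<omega>. f (LINT u:orthant|lborel. Z u \<omega>) \<partial>N)\<bar> < \<eta>"
    and L3: "0 < L"
    unfolding eventually_sequentially by blast

  have evk1: "\<forall>\<^sub>F k in sequentially. limsup (\<lambda>n. ereal (measure (M n)
           {\<omega> \<in> space (M n). \<bar>(LINT u:boxL L|lborel. Y n (gr k u) \<omega>) - (LINT u:boxL L|lborel. Y n u \<omega>)\<bar> > \<epsilon>})) < ereal (\<eta> / 2)"
    by (rule order_tendstoD(2)[OF discr[OF \<epsilon> L3]]) (simp add: \<eta>)
  have evk2: "\<forall>\<^sub>F k in sequentially. \<bar>(\<integral>\<omega>. f (LINT u:boxL L|lborel. Z (gr k u) \<omega>) \<partial>N) - (\<integral>\<omega>. f (LINT u:boxL L|lborel. Z u \<omega>) \<partial>N)\<bar> < \<eta>"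
    using tendstoD[OF rfield.conv_k[OF RZ fc fb, of L] \<eta>] by (simp add: dist_real_def)
  have "\<forall>\<^sub>F k in sequentially. limsup (\<lambda>n. ereal (measure (M n)
           {\<omega> \<in> space (M n). \<bar>(LINT u:boxL L|lborel. Y n (gr k u) \<omega>) - (LINT u:boxL L|lborel. Y n u \<omega>)\<bar> > \<epsilon>})) < ereal (\<eta> / 2)
      \<and> \<bar>(\<integral>\<omega>. f (LINT u:boxL L|lborel. Z (gr k u) \<omega>) \<partial>N) - (\<integral>\<omega>. f (LINT u:boxL L|lborel. Z u \<omega>) \<partial>N)\<bar> < \<eta>
      \<and> 0 < k"
    using evk1 evk2 eventually_gt_at_top[of 0] by eventually_elim auto
  then obtain k :: nat where k1: "limsup (\<lambda>n. ereal (measure (M n)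
           {\<omega> \<in> space (M n). \<bar>(LINT u:boxL L|lborel. Y n (gr k u) \<omega>) - (LINT u:boxL L|lborel. Y n u \<omega>)\<bar> > \<epsilon>})) < ereal (\<eta> / 2)"
    and k2: "\<bar>(\<integral>\<omega>. f (LINT u:boxL L|lborel. Z (gr k u) \<omega>) \<partial>N) - (\<integral>\<omega>. f (LINT u:boxL L|lborel. Z u \<omega>) \<partial>N)\<bar> < \<eta>"
    and k3: "0 < k"
    unfolding eventually_sequentially by blast

  have evn1: "\<forall>\<^sub>F n in sequentially. \<bar>(\<integral>\<omega>. f (LINT u:boxL L|lborel. Y n (gr k u) \<omega>) \<partial>M n) - (\<integral>\<omega>. f (LINT u:boxL L|lborel. Z (gr k u) \<omega>) \<partial>N)\<bar> < \<eta>"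
    using tendstoD[OF fdd_riemann[OF fdd k3 fc fb, of L] \<eta>] by (simp add: dist_real_def)
  have evn2: "\<forall>\<^sub>F n in sequentially. \<forall>j. ereal (LINT u:{u \<in> orthant. real L \<le> u $ j}|lborel. (\<integral>\<omega>. \<bar>Y n u \<omega>\<bar> \<partial>M n)) < ereal \<delta>"
    by (intro eventually_all_finite allI Limsup_lessD L1)
  have evn3: "\<forall>\<^sub>F n in sequentially. ereal (measure (M n)
           {\<omega> \<in> space (M n). \<bar>(LINT u:boxL L|lborel. Y n (gr k u) \<omega>) - (LINT u:boxL L|lborel. Y n u \<omega>)\<bar> > \<epsilon>}) < ereal (\<eta> / 2)"
    by (rule Limsup_lessD[OF k1])
  show "\<forall>\<^sub>F n in sequentially. \<bar>(\<integral>\<omega>. f (LINT u:orthant|lborel. Y n u \<omega>) \<partial>M n) - (\<integral>\<omega>. f (LINT u:orthant|lborel. Z u \<omega>) \<partial>N)\<bar> < r"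
    using evn1 evn2 evn3
  proof eventually_elim
    case (elim n)
    interpret prob_space "M n" by (rule probM)
    have mS[measurable]: "(\<lambda>\<omega>. LINT u:orthant|lborel. Y n u \<omega>) \<in> borel_measurable (M n)"
      by (rule rfield.S_meas[OF RY])
    have mX[measurable]: "(\<lambda>\<omega>. LINT u:boxL L|lborel. Y n u \<omega>) \<in> borel_measurable (M n)"
      by (rule rfield.XL_meas[OF RY])
    have mXk[measurable]: "(\<lambda>\<omega>. LINT u:boxL L|lborel. Y n (gr k u) \<omega>) \<in> borel_measurable (M n)"
      by (rule rfield.XkL_meas[OF RY k3])
    define A0 where "A0 = {\<omega> \<in> space (M n). \<bar>(LINT u:orthant|lborel. Y n u \<omega>) - (LINT u:boxL L|lborel. Y n (gr k u) \<omega>)\<bar> > 2 * \<epsilon>}"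
    define A1 where "A1 = {\<omega> \<in> space (M n). \<bar>(LINT u:orthant|lborel. Y n u \<omega>) - (LINT u:boxL L|lborel. Y n u \<omega>)\<bar> > \<epsilon>}"
    define A2 where "A2 = {\<omega> \<in> space (M n). \<bar>(LINT u:boxL L|lborel. Y n (gr k u) \<omega>) - (LINT u:boxL L|lborel. Y n u \<omega>)\<bar> > \<epsilon>}"
    have A1s: "A1 \<in> sets (M n)" unfolding A1_def by measurable
    have A2s: "A2 \<in> sets (M n)" unfolding A2_def by measurable
    have "A0 \<subseteq> A1 \<union> A2" unfolding A0_def A1_def A2_def by auto
    then have "measure (M n) A0 \<le> measure (M n) (A1 \<union> A2)"
      using A1s A2s by (intro finite_measure_mono) auto
    also have "\<dots> \<le> measure (M n) A1 + measure (M n) A2"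
      using A1s A2s by (intro measure_subadditive) auto
    finally have A012: "measure (M n) A0 \<le> measure (M n) A1 + measure (M n) A2" .
    have A2b: "measure (M n) A2 < \<eta> / 2" using elim(3) unfolding A2_def by simp
    have "\<epsilon> * measure (M n) A1 \<le> (\<Sum>j\<in>UNIV. LINT u:{u \<in> orthant. real L \<le> u $ j}|lborel. (\<integral>\<omega>. \<bar>Y n u \<omega>\<bar> \<partial>M n))"
      unfolding A1_def by (rule rfield.tail_prob[OF RY \<epsilon> intY])
    also have "\<dots> \<le> (\<Sum>j\<in>(UNIV::'m set). \<delta>)"
      using elim(2) by (intro sum_mono) (simp add: less_imp_le)
    also have "\<dots> = cm * \<delta>" by (simp add: cm_def)
    finally have "\<epsilon> * measure (M n) A1 \<le> \<epsilon> * (\<eta> / 2)" using cm\<delta> by (simp add: mult.commute)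
    then have A1b: "measure (M n) A1 \<le> \<eta> / 2" using \<epsilon> by simp
    have lip: "\<bar>(\<integral>\<omega>. f (LINT u:orthant|lborel. Y n u \<omega>) \<partial>M n) - (\<integral>\<omega>. f (LINT u:boxL L|lborel. Y n (gr k u) \<omega>) \<partial>M n)\<bar>
        \<le> C * (2 * \<epsilon>) + 2 * measure (M n) A0"
      unfolding A0_def by (rule lip_est[OF probM mS mXk fb fl fc C]) (use \<epsilon> in simp)
    have "C * (2 * \<epsilon>) \<le> 2 * \<eta>" using C\<epsilon> by simp
    then have lip2: "\<bar>(\<integral>\<omega>. f (LINT u:orthant|lborel. Y n u \<omega>) \<partial>M n) - (\<integral>\<omega>. f (LINT u:boxL L|lborel. Y n (gr k u) \<omega>) \<partial>M n)\<bar>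
        \<le> 4 * \<eta>" using lip A012 A1b A2b by linarith
    show ?case using lip2 elim(1) k2 L2 unfolding \<eta>_def by linarith
  qed
qed


theorem lemmaA2:
  fixes M :: "nat \<Rightarrow> 'a measure" and N :: "'b measure"
    and Y :: "nat \<Rightarrow> real ^ 'm \<Rightarrow> 'a \<Rightarrow> real"
    and Z :: "real ^ 'm \<Rightarrow> 'b \<Rightarrow> real"
  assumes probM: "\<And>n. prob_space (M n)"
    and probN: "prob_space N"
    and measY: "\<And>n u. u \<in> orthant \<Longrightarrow> Y n u \<in> borel_measurable (M n)"
    and measZ: "\<And>u. u \<in> orthant \<Longrightarrow> Z u \<in> borel_measurable N"
    and contY: "\<And>n \<omega>. \<omega> \<in> space (M n) \<Longrightarrow> continuous_on orthant (\<lambda>u. Y n u \<omega>)"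
    and contZ: "\<And>\<omega>. \<omega> \<in> space N \<Longrightarrow> continuous_on orthant (\<lambda>u. Z u \<omega>)"
    and fdd: "fdd_conv M Y N Z orthant"
    and intY: "\<And>n. (\<integral>\<^sup>+ u. indicator orthant u * (\<integral>\<^sup>+ \<omega>. ennreal \<bar>Y n u \<omega>\<bar> \<partial>M n) \<partial>lborel) < \<infinity>"
    and intZ: "(\<integral>\<^sup>+ u. indicator orthant u * (\<integral>\<^sup>+ \<omega>. ennreal \<bar>Z u \<omega>\<bar> \<partial>N) \<partial>lborel) < \<infinity>"
    and tails: "\<And>j. (\<lambda>L::nat. limsup (\<lambda>n. ereal
                   (LINT u:{u \<in> orthant. real L \<le> u $ j}|lborel. (\<integral>\<omega>. \<bar>Y n u \<omega>\<bar> \<partial>M n))))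
                 \<longlonglongrightarrow> 0"
    and discr: "\<And>(eps::real) (L::nat). eps > 0 \<Longrightarrow> L > 0 \<Longrightarrow>
        (\<lambda>k::nat. limsup (\<lambda>n. ereal (measure (M n)
           {\<omega> \<in> space (M n).
              \<bar>(LINT u:{u. \<forall>j. 0 \<le> u $ j \<and> u $ j \<le> real L}|lborel.
                   Y n (\<chi> j. real_of_int \<lfloor>u $ j * real k\<rfloor> / real k) \<omega>)
               - (LINT u:{u. \<forall>j. 0 \<le> u $ j \<and> u $ j \<le> real L}|lborel. Y n u \<omega>)\<bar> > eps})))
        \<longlonglongrightarrow> 0"
  shows "weak_conv_m (\<lambda>n. distr (M n) borel (\<lambda>\<omega>. LINT u:orthant|lborel. Y n u \<omega>))
                     (distr N borel (\<lambda>\<omega>. LINT u:orthant|lborel. Z u \<omega>))"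
proof -
  have RY: "rfield (M n) (Y n)" for n by (rule rfield.intro) (auto intro: probM measY contY)
  have RZ: "rfield N Z" by (rule rfield.intro) (auto intro: probN measZ contZ)
  have mS: "(\<lambda>\<omega>. LINT u:orthant|lborel. Y n u \<omega>) \<in> borel_measurable (M n)" for n
    by (rule rfield.S_meas[OF RY])
  have mSZ: "(\<lambda>\<omega>. LINT u:orthant|lborel. Z u \<omega>) \<in> borel_measurable N"
    by (rule rfield.S_meas[OF RZ])
  have discr': "(\<lambda>k::nat. limsup (\<lambda>n. ereal (measure (M n)
           {\<omega> \<in> space (M n).
              \<bar>(LINT u:boxL L|lborel. Y n (gr k u) \<omega>)
               - (LINT u:boxL L|lborel. Y n u \<omega>)\<bar> > eps})))
        \<longlonglongrightarrow> 0" if "eps > 0" "L > 0" for eps :: real and L :: nat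
    unfolding boxL_def gr_def by (rule discr[OF that])
  show ?thesis
  proof (rule integral_cts_step_conv_imp_weak_conv)
    show "real_distribution (distr (M n) borel (\<lambda>\<omega>. LINT u:orthant|lborel. Y n u \<omega>))" for n
      using prob_space.real_distribution_distr[OF probM mS] by simp
    show "real_distribution (distr N borel (\<lambda>\<omega>. LINT u:orthant|lborel. Z u \<omega>))"
      using prob_space.real_distribution_distr[OF probN mSZ] by simp
    fix x y :: real assume xy: "x < y"
    have cm: "cts_step x y \<in> borel_measurable borel"
      by (rule borel_measurable_continuous_onI[OF cts_step_props(2)[OF xy]])
    have "(\<lambda>n. \<integral>\<omega>. cts_step x y (LINT u:orthant|lborel. Y n u \<omega>) \<partial>M n)
        \<longlonglongrightarrow> (\<integral>\<omega>. cts_step x y (LINT u:orthant|lborel. Z u \<omega>) \<partial>N)"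
      by (rule main_conv[OF probM probN measY measZ contY contZ fdd intY intZ tails discr'
            cts_step_props(2)[OF xy] cts_step_props(1)[OF xy] cts_step_props(3)[OF xy]]) (use xy in auto)
    then show "(\<lambda>n. integral\<^sup>L (distr (M n) borel (\<lambda>\<omega>. LINT u:orthant|lborel. Y n u \<omega>)) (cts_step x y))
        \<longlonglongrightarrow> integral\<^sup>L (distr N borel (\<lambda>\<omega>. LINT u:orthant|lborel. Z u \<omega>)) (cts_step x y)"
      by (simp add: integral_distr[OF mS cm] integral_distr[OF mSZ cm])
  qed
qed

end
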